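(* Let $f:\mathbb{R}^d\to\mathbb{R}^d$ be smooth with all derivatives uniformly bounded, let $n\ge 3$, and for each step size $h>0$ (in some range $0<h\le h_0$) let $q:[0,h]\to\mathbb{R}^d$ be a smooth solution of $\ddot q(t)=f(q(t))$ and let $q_d$ be a prolongation-collocation Hermite polynomial of degree $2n-1$ for $q$ on $[0,h]$ (as defined in the context), with $\dot q$ and $\dot q_d(\tau)$, $\tau\in\{0,h\}$, bounded uniformly in $h$. Suppose that for some $p>0$ and for $\tau\in\{0,h\}$ one has $\dot q_d(\tau)=\dot q(\tau)+\mathcal{O}(h^p)$ as $h\to 0$. Then for $\tau\in\{0,h\}$, $$q_d^{(j)}(\tau)=q^{(j)}(\tau)+\mathcal{O}(h^p),\qquad j=3,\dots,n.$$
   Context: Setting: configuration space $Q=\mathbb{R}^d$, separable Lagrangian $L(q,\dot q)=\tfrac12 m|\dot q|^2-V(q)$, whose Euler--Lagrange equation is the second-order ODE $\ddot q=f(q)$ with $f=-\nabla V/m$. Given a solution $q$ of this ODE on $[0,h]$, a prolongation-collocation Hermite polynomial of degree $2n-1$ for $q$ on $[0,h]$ is a polynomial $q_d:[0,h]\to\mathbb{R}^d$ of degree at most $2n-1$ satisfying the boundary conditions $q_d(0)=q(0)$, $q_d(h)=q(h)$ and the collocation conditions, for $\tau\in\{0,h\}$ and $j=2,\dots,n$, $$q_d^{(j)}(\tau)=\frac{d^{j-2}}{dt^{j-2}}f(q_d(t))\Big|_{t=\tau},$$ i.e. $q_d$ satisfies the equation $\ddot q=f(q)$ and its first $n-2$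 time-derivatives (prolongations) $q^{(3)}=f'(q)\dot q$, etc., at the endpoints $t=0$ and $t=h$. Such a polynomial is written in two-point Hermite form $q_d(t)=\sum_{j=0}^{n-1}\big(q_d^{(j)}(0)H_{n,j}(t)+(-1)^j q_d^{(j)}(h)H_{n,j}(h-t)\big)$ with $H_{n,j}(t)=\frac{t^j}{j!}(1-t/h)^n\sum_{s=0}^{n-j-1}\binom{n+s-1}{s}(t/h)^s$. The $\mathcal{O}(\cdot)$ symbols are as $h\to0$ with constants independent of $h$. *)

theory Defs
  imports "HOL-Analysis.Analysis" "HOL-Library.Landau_Symbols"
begin

text \<open>j-th derivative of a curve g on the set S (one-sided at endpoints of an interval).\<close>
fun hvd :: "nat \<Rightarrow> (real \<Rightarrow> 'a::real_normed_vector) \<Rightarrow> real set \<Rightarrow> real \<Rightarrow> 'a" where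
  "hvd 0 g S = g"
| "hvd (Suc j) g S = (\<lambda>t. vector_derivative (hvd j g S) (at t within S))"

definition smooth_curve_on :: "(real \<Rightarrow> 'a::real_normed_vector) \<Rightarrow> real set \<Rightarrow> bool" where
  "smooth_curve_on g S \<longleftrightarrow>
     (\<forall>j. \<forall>t\<in>S. (hvd j g S has_vector_derivative hvd (Suc j) g S t) (at t within S))"

text \<open>f : R^d \<rightarrow> R^d smooth with all derivatives (orders 0,1,2,...) uniformly bounded.
  Df k x [v1,...,vk] is the k-th Frechet derivative of f at x applied to v1,...,vk.\<close>
definition smooth_bounded_derivs :: "('a::euclidean_space \<Rightarrow> 'a) \<Rightarrow> bool" where
  "smooth_bounded_derivs f \<longleftrightarrow>
     (\<exists>Df :: nat \<Rightarrow> 'a \<Rightarrow> 'a list \<Rightarrow> 'a.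
        (\<forall>x. Df 0 x [] = f x) \<and>
        (\<forall>k x vs. length vs = k \<longrightarrow>
            ((\<lambda>y. Df k y vs) has_derivative (\<lambda>w. Df (Suc k) x (w # vs))) (at x)) \<and>
        (\<forall>k. \<exists>M. \<forall>x vs. length vs = k \<longrightarrow> norm (Df k x vs) \<le> M * (\<Prod>v\<leftarrow>vs. norm v)))"

definition PC_Hermite ::
  "('a::euclidean_space \<Rightarrow> 'a) \<Rightarrow> nat \<Rightarrow> real \<Rightarrow> (real \<Rightarrow> 'a) \<Rightarrow> (real \<Rightarrow> 'a) \<Rightarrow> bool" where
  "PC_Hermite f n h q qd \<longleftrightarrow>
     (\<exists>c :: nat \<Rightarrow> 'a. \<forall>t. qd t = (\<Sum>i\<le>2*n-1. t ^ i *\<^sub>R c i)) \<and>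
     qd 0 = q 0 \<and> qd h = q h \<and>
     (\<forall>\<tau>\<in>{0, h}. \<forall>j\<in>{2..n}.
        hvd j qd {0..h} \<tau> = hvd (j - 2) (\<lambda>t. f (qd t)) {0..h} \<tau>)"

end

theory Submission
  imports Defs
begin



locale dfl =
  fixes Df :: "nat \<Rightarrow> 'a::euclidean_space \<Rightarrow> 'a list \<Rightarrow> 'a"
  assumes DD: "\<And>k x vs. length vs = k \<Longrightarrow>
            ((\<lambda>y. Df k y vs) has_derivative (\<lambda>w. Df (Suc k) x (w # vs))) (at x)"
    and DB: "\<And>k. \<exists>M. \<forall>x vs. length vs = k \<longrightarrow> norm (Df k x vs) \<le> M * (\<Prod>v\<leftarrow>vs. norm v)"
begin

lemma lin: "linear (\<lambda>v. Df (length xs + Suc (length ys)) x (xs @ v # ys))"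
proof (induction xs arbitrary: x)
  case Nil
  show ?case using DD[of ys "length ys" x] has_derivative_bounded_linear bounded_linear.linear by fastforce
next
  case (Cons u xs)
  define k where "k = length xs + Suc (length ys)"
  have D: "\<And>v. ((\<lambda>y. Df k y (xs @ v # ys)) has_derivative (\<lambda>w. Df (Suc k) x (w # xs @ v # ys))) (at x)"
    using DD k_def by simp
  have IH: "\<And>y. linear (\<lambda>v. Df k y (xs @ v # ys))" using Cons k_def by simp
  show ?case
  proof (rule linearI)
    fix a b
    have e: "(\<lambda>y. Df k y (xs @ (a+b) # ys)) = (\<lambda>y. Df k y (xs @ a # ys) + Df k y (xs @ b # ys))"
      using IH linear_add by fastforce
    have "((\<lambda>y. Df k y (xs @ (a+b) # ys)) has_derivative
       (\<lambda>w. Df (Suc k) x (w # xs @ a # ys) + Df (Suc k) x (w # xs @ b # ys))) (at x)"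
      unfolding e by (intro has_derivative_add D)
    from has_derivative_unique[OF D[of "a+b"] this]
    show "Df (length (u # xs) + Suc (length ys)) x ((u # xs) @ (a + b) # ys) =
          Df (length (u # xs) + Suc (length ys)) x ((u # xs) @ a # ys) + Df (length (u # xs) + Suc (length ys)) x ((u # xs) @ b # ys)"
      using k_def by (simp add: fun_eq_iff)
  next
    fix c a
    have e: "(\<lambda>y. Df k y (xs @ (c *\<^sub>R a) # ys)) = (\<lambda>y. c *\<^sub>R Df k y (xs @ a # ys))"
      using IH linear_scale by fastforce
    have "((\<lambda>y. Df k y (xs @ (c *\<^sub>R a) # ys)) has_derivative
       (\<lambda>w. c *\<^sub>R Df (Suc k) x (w # xs @ a # ys))) (at x)"
      unfolding e by (intro has_derivative_scaleR_right D)
    from has_derivative_unique[OF D[of "c *\<^sub>R a"] this]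
    show "Df (length (u # xs) + Suc (length ys)) x ((u # xs) @ (c *\<^sub>R a) # ys) =
          c *\<^sub>R Df (length (u # xs) + Suc (length ys)) x ((u # xs) @ a # ys)"
      using k_def by (simp add: fun_eq_iff)
  qed
qed

lemma lin': "length xs + Suc (length ys) = m \<Longrightarrow> linear (\<lambda>v. Df m x (xs @ v # ys))"
  using lin by blast

lemma tele:
  assumes "length ws = m" "length us = m"
  shows "Df m y ws - Df m y us = (\<Sum>i<m. Df m y (take i ws @ (ws!i - us!i) # drop (Suc i) us))"
proof -
  define mix where "mix i = take i ws @ drop i us" for i
  have st: "Df m y (mix (Suc i)) - Df m y (mix i) = Df m y (take i ws @ (ws!i - us!i) # drop (Suc i) us)"
    if "i < m" for i
  proof -
    have a: "mix (Suc i) = take i ws @ ws!i # drop (Suc i) us"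
      using that assms by (simp add: mix_def take_Suc_conv_app_nth Cons_nth_drop_Suc)
    have b: "mix i = take i ws @ us!i # drop (Suc i) us"
      using that assms by (simp add: mix_def Cons_nth_drop_Suc)
    have L: "linear (\<lambda>v. Df m y (take i ws @ v # drop (Suc i) us))"
      by (rule lin') (use that assms in auto)
    show ?thesis unfolding a b using linear_diff[OF L] by simp
  qed
  have "(\<Sum>i<m. Df m y (mix (Suc i)) - Df m y (mix i)) = Df m y (mix m) - Df m y (mix 0)"
    by (rule sum_lessThan_telescope)
  moreover have "mix m = ws" "mix 0 = us" using assms by (auto simp: mix_def)
  ultimately show ?thesis using st by simp
qed

end



lemma prod_list_upt_eq: "prod_list (map f [0..<i]) = (\<Prod>j<i. f j)"
  by (induction i) (auto simp: lessThan_Suc mult.commute)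

lemma quot_iff:
  fixes H :: "real \<Rightarrow> 'b::real_normed_vector"
  shows "(H has_vector_derivative L) (at t within S) \<longleftrightarrow>
         ((\<lambda>s. (1/(s - t)) *\<^sub>R (H s - H t)) \<longlongrightarrow> L) (at t within S)"
proof -
  have bl: "bounded_linear (\<lambda>x. x *\<^sub>R L)" by (rule bounded_linear_scaleR_left)
  have ev: "eventually (\<lambda>y. norm ((1 / norm (y - t)) *\<^sub>R (H y - (H t + (y - t) *\<^sub>R L)))
      = norm ((1/(y - t)) *\<^sub>R (H y - H t) - L)) (at t within S)"
  proof -
    have "norm ((1 / norm (y - t)) *\<^sub>R (H y - (H t + (y - t) *\<^sub>R L)))
      = norm ((1/(y - t)) *\<^sub>R (H y - H t) - L)" if "y \<noteq> t" for y
    proof -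
      have o: "(1/(y-t)) *\<^sub>R ((y - t) *\<^sub>R L) = L" using that by simp
      have "(1/(y-t)) *\<^sub>R (H y - (H t + (y - t) *\<^sub>R L)) = (1/(y-t)) *\<^sub>R (H y - H t) - (1/(y-t)) *\<^sub>R ((y - t) *\<^sub>R L)"
        by (simp add: algebra_simps)
      then have "(1/(y - t)) *\<^sub>R (H y - H t) - L = (1/(y-t)) *\<^sub>R (H y - (H t + (y - t) *\<^sub>R L))"
        using o by simp
      then show ?thesis by simp
    qed
    then show ?thesis by (auto simp: eventually_at_filter)
  qed
  have "(H has_vector_derivative L) (at t within S) \<longleftrightarrow>
    ((\<lambda>y. norm ((1 / norm (y - t)) *\<^sub>R (H y - (H t + (y - t) *\<^sub>R L)))) \<longlongrightarrow> 0) (at t within S)"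
    unfolding has_vector_derivative_def has_derivative_within tendsto_norm_zero_iff using bl by simp
  also have "\<dots> \<longleftrightarrow> ((\<lambda>y. norm ((1/(y - t)) *\<^sub>R (H y - H t) - L)) \<longlongrightarrow> 0) (at t within S)"
    using ev by (intro tendsto_cong) auto
  also have "\<dots> \<longleftrightarrow> ((\<lambda>s. (1/(s - t)) *\<^sub>R (H s - H t)) \<longlongrightarrow> L) (at t within S)"
    by (simp add: tendsto_norm_zero_iff LIM_zero_iff)
  finally show ?thesis .
qed

context dfl begin

definition Mb :: "nat \<Rightarrow> real" where
  "Mb k = \<bar>SOME M. \<forall>x vs. length vs = k \<longrightarrow> norm (Df k x vs) \<le> M * (\<Prod>v\<leftarrow>vs. norm v)\<bar>"

lemma bnd: "length vs = k \<Longrightarrow> norm (Df k x vs) \<le> Mb k * (\<Prod>v\<leftarrow>vs. norm v)"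
proof -
  assume l: "length vs = k"
  obtain M where M: "\<forall>x vs. length vs = k \<longrightarrow> norm (Df k x vs) \<le> M * (\<Prod>v\<leftarrow>vs. norm v)"
    using DB by blast
  let ?M = "SOME M. \<forall>x vs. length vs = k \<longrightarrow> norm (Df k x vs) \<le> M * (\<Prod>v\<leftarrow>vs. norm v)"
  have "\<forall>x vs. length vs = k \<longrightarrow> norm (Df k x vs) \<le> ?M * (\<Prod>v\<leftarrow>vs. norm v)"
    using someI_ex[of "\<lambda>M. \<forall>x vs. length vs = k \<longrightarrow> norm (Df k x vs) \<le> M * (\<Prod>v\<leftarrow>vs. norm v)"] M by blast
  then have "norm (Df k x vs) \<le> ?M * (\<Prod>v\<leftarrow>vs. norm v)" using l by blast
  also have "\<dots> \<le> \<bar>?M\<bar> * (\<Prod>v\<leftarrow>vs. norm v)"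
    by (intro mult_right_mono) (auto intro!: prod_list_nonneg)
  finally show ?thesis unfolding Mb_def .
qed

lemma Mb_nonneg: "0 \<le> Mb k" by (simp add: Mb_def)

lemma small:
  assumes g: "(g \<longlongrightarrow> y0) F" and V: "\<forall>j<i. (V j \<longlongrightarrow> v0 j) F" and E: "(E \<longlongrightarrow> 0) F"
    and len: "i + Suc (length R) = m"
  shows "((\<lambda>s. Df m (g s) (map (\<lambda>j. V j s) [0..<i] @ E s # R)) \<longlongrightarrow> 0) F"
proof (rule Lim_null_comparison)
  show "eventually (\<lambda>s. norm (Df m (g s) (map (\<lambda>j. V j s) [0..<i] @ E s # R))
     \<le> Mb m * ((\<Prod>j<i. norm (V j s)) * (norm (E s) * (\<Prod>v\<leftarrow>R. norm v)))) F"
    using bnd[of "map (\<lambda>j. V j s) [0..<i] @ E s # R" m for s] len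
    by (intro always_eventually) (auto simp: prod_list_upt_eq[symmetric] o_def)
  have "((\<lambda>s. Mb m * ((\<Prod>j<i. norm (V j s)) * (norm (E s) * (\<Prod>v\<leftarrow>R. norm v))))
        \<longlongrightarrow> Mb m * ((\<Prod>j<i. norm (v0 j)) * (norm (0::'a) * (\<Prod>v\<leftarrow>R. norm v)))) F"
    using V E by (intro tendsto_intros tendsto_prod) auto
  then show "((\<lambda>s. Mb m * ((\<Prod>j<i. norm (V j s)) * (norm (E s) * (\<Prod>v\<leftarrow>R. norm v)))) \<longlongrightarrow> 0) F"
    by simp
qed

lemma cont:
  assumes g: "(g \<longlongrightarrow> y0) F" and V: "\<forall>j<i. (V j \<longlongrightarrow> v0 j) F"
    and len: "i + length R = m"
  shows "((\<lambda>s. Df m (g s) (map (\<lambda>j. V j s) [0..<i] @ R)) \<longlongrightarrow> Df m y0 (map v0 [0..<i] @ R)) F"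
  using V len
proof (induction i arbitrary: R)
  case 0
  have "isCont (\<lambda>y. Df m y R) y0"
    using DD[of R m y0] 0 has_derivative_continuous by auto
  then show ?case using isCont_tendsto_compose[OF _ g] by simp
next
  case (Suc i)
  have L: "linear (\<lambda>v. Df m y (map (\<lambda>j. V j s) [0..<i] @ v # R))" for y s
    by (rule lin') (use Suc.prems in auto)
  have e: "Df m (g s) (map (\<lambda>j. V j s) [0..<Suc i] @ R) =
      Df m (g s) (map (\<lambda>j. V j s) [0..<i] @ v0 i # R) +
      Df m (g s) (map (\<lambda>j. V j s) [0..<i] @ (V i s - v0 i) # R)" for s
    using linear_add[OF L, of "g s" s "v0 i" "V i s - v0 i"] by simp
  have A: "((\<lambda>s. Df m (g s) (map (\<lambda>j. V j s) [0..<i] @ v0 i # R)) \<longlongrightarrow>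
      Df m y0 (map v0 [0..<i] @ v0 i # R)) F"
    using Suc.IH[of "v0 i # R"] Suc.prems by auto
  have B: "((\<lambda>s. Df m (g s) (map (\<lambda>j. V j s) [0..<i] @ (V i s - v0 i) # R)) \<longlongrightarrow> 0) F"
    using Suc.prems by (intro small[OF g, of _ V v0]) (auto intro: tendsto_eq_intros)
  show ?case unfolding e using tendsto_add[OF A B] by simp
qed

end


context dfl begin

lemma hd:
  assumes g: "(g has_vector_derivative g') (at t within S)"
    and V: "\<forall>j<i. (V j has_vector_derivative V' j) (at t within S)"
    and W: "(W has_vector_derivative W') (at t within S)"
    and len: "i + Suc (length R) = m"
  shows "((\<lambda>s. Df m (g s) (map (\<lambda>j. V j s) [0..<i] @ (W s - W t) # R)) has_vector_derivative
          Df m (g t) (map (\<lambda>j. V j t) [0..<i] @ W' # R)) (at t within S)"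
proof -
  have L: "linear (\<lambda>v. Df m y (map (\<lambda>j. V j s) [0..<i] @ v # R))" for y s
    by (rule lin') (use len in auto)
  have gl: "(g \<longlongrightarrow> g t) (at t within S)"
    using has_vector_derivative_continuous[OF g] continuous_within by blast
  have Vl: "\<forall>j<i. (V j \<longlongrightarrow> V j t) (at t within S)"
    using V has_vector_derivative_continuous continuous_within by blast
  define Q where "Q s = (1/(s - t)) *\<^sub>R (W s - W t)" for s
  have Ql: "(Q \<longlongrightarrow> W') (at t within S)" using W unfolding quot_iff Q_def[abs_def] .
  have e: "(1/(s - t)) *\<^sub>R (Df m (g s) (map (\<lambda>j. V j s) [0..<i] @ (W s - W t) # R) -
            Df m (g t) (map (\<lambda>j. V j t) [0..<i] @ (W t - W t) # R)) =
      Df m (g s) (map (\<lambda>j. V j s) [0..<i] @ W' # R) +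
      Df m (g s) (map (\<lambda>j. V j s) [0..<i] @ (Q s - W') # R)" for s
  proof -
    have "Df m (g t) (map (\<lambda>j. V j t) [0..<i] @ (W t - W t) # R) = 0"
      using linear_0[OF L] by simp
    moreover have "(1/(s - t)) *\<^sub>R Df m (g s) (map (\<lambda>j. V j s) [0..<i] @ (W s - W t) # R) =
        Df m (g s) (map (\<lambda>j. V j s) [0..<i] @ Q s # R)"
      using linear_scale[OF L, symmetric] Q_def by simp
    moreover have "Df m (g s) (map (\<lambda>j. V j s) [0..<i] @ Q s # R) =
        Df m (g s) (map (\<lambda>j. V j s) [0..<i] @ W' # R) +
        Df m (g s) (map (\<lambda>j. V j s) [0..<i] @ (Q s - W') # R)"
      using linear_add[OF L, of "g s" s W' "Q s - W'"] by simp
    ultimately show ?thesis by simp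
  qed
  have A: "((\<lambda>s. Df m (g s) (map (\<lambda>j. V j s) [0..<i] @ W' # R)) \<longlongrightarrow>
      Df m (g t) (map (\<lambda>j. V j t) [0..<i] @ W' # R)) (at t within S)"
    using cont[OF gl, of i V "\<lambda>j. V j t" "W' # R" m] Vl len by simp
  have B: "((\<lambda>s. Df m (g s) (map (\<lambda>j. V j s) [0..<i] @ (Q s - W') # R)) \<longlongrightarrow> 0) (at t within S)"
    using Ql Vl len by (intro small[OF gl, of _ V "\<lambda>j. V j t"]) (auto intro: tendsto_eq_intros simp: LIM_zero_iff)
  show ?thesis unfolding quot_iff e using tendsto_add[OF A B] by simp
qed

lemma der:
  assumes g: "(g has_vector_derivative g') (at t within S)"
    and V: "\<forall>j<i. (V j has_vector_derivative V' j) (at t within S)"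
    and len: "i + length R = m"
  shows "((\<lambda>s. Df m (g s) (map (\<lambda>j. V j s) [0..<i] @ R)) has_vector_derivative
     (Df (Suc m) (g t) (g' # map (\<lambda>j. V j t) [0..<i] @ R) +
      (\<Sum>k<i. Df m (g t) (map (\<lambda>j. if j = k then V' k else V j t) [0..<i] @ R)))) (at t within S)"
  using V len
proof (induction i arbitrary: R)
  case 0
  have D: "((\<lambda>y. Df m y R) has_derivative (\<lambda>w. Df (Suc m) (g t) (w # R))) (at (g t))"
    using DD 0 by simp
  have g0: "(g has_derivative (\<lambda>x. x *\<^sub>R g')) (at t within S)"
    using g has_vector_derivative_def by blast
  have L: "linear (\<lambda>v. Df (Suc m) (g t) ([] @ v # R))" by (rule lin') (use 0 in auto)
  have "((\<lambda>s. Df m (g s) R) has_derivative (\<lambda>x. Df (Suc m) (g t) ((x *\<^sub>R g') # R))) (at t within S)"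
    using has_derivative_compose[OF g0 D] by simp
  moreover have "(\<lambda>x. Df (Suc m) (g t) ((x *\<^sub>R g') # R)) = (\<lambda>x. x *\<^sub>R Df (Suc m) (g t) (g' # R))"
    using linear_scale[OF L] by auto
  ultimately show ?case by (simp add: has_vector_derivative_def)
next
  case (Suc i)
  have L: "linear (\<lambda>v. Df m y (map (\<lambda>j. V j s) [0..<i] @ v # R))" for y s
    by (rule lin') (use Suc.prems in auto)
  have e: "Df m (g s) (map (\<lambda>j. V j s) [0..<Suc i] @ R) =
      Df m (g s) (map (\<lambda>j. V j s) [0..<i] @ V i t # R) +
      Df m (g s) (map (\<lambda>j. V j s) [0..<i] @ (V i s - V i t) # R)" for s
    using linear_add[OF L, of "g s" s "V i t" "V i s - V i t"] by simp
  have A: "((\<lambda>s. Df m (g s) (map (\<lambda>j. V j s) [0..<i] @ V i t # R)) has_vector_derivative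
     (Df (Suc m) (g t) (g' # map (\<lambda>j. V j t) [0..<i] @ V i t # R) +
      (\<Sum>k<i. Df m (g t) (map (\<lambda>j. if j = k then V' k else V j t) [0..<i] @ V i t # R)))) (at t within S)"
    using Suc.IH[of "V i t # R"] Suc.prems by auto
  have B: "((\<lambda>s. Df m (g s) (map (\<lambda>j. V j s) [0..<i] @ (V i s - V i t) # R)) has_vector_derivative
       Df m (g t) (map (\<lambda>j. V j t) [0..<i] @ V' i # R)) (at t within S)"
    using Suc.prems by (intro hd[OF g, of _ V V']) auto
  have s1: "(\<Sum>k<i. Df m (g t) (map (\<lambda>j. if j = k then V' k else V j t) [0..<i] @ V i t # R)) =
      (\<Sum>k<i. Df m (g t) (map (\<lambda>j. if j = k then V' k else V j t) [0..<Suc i] @ R))"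
    by (intro sum.cong) auto
  have s2: "map (\<lambda>j. V j t) [0..<i] @ V' i # R = map (\<lambda>j. if j = i then V' i else V j t) [0..<Suc i] @ R"
    by auto
  have s3: "(\<Sum>k<Suc i. Df m (g t) (map (\<lambda>j. if j = k then V' k else V j t) [0..<Suc i] @ R)) =
      (\<Sum>k<i. Df m (g t) (map (\<lambda>j. if j = k then V' k else V j t) [0..<Suc i] @ R)) +
      Df m (g t) (map (\<lambda>j. V j t) [0..<i] @ V' i # R)"
    unfolding sum.lessThan_Suc s2 ..
  have s4: "map (\<lambda>j. V j t) [0..<i] @ V i t # R = map (\<lambda>j. V j t) [0..<Suc i] @ R" by simp
  show ?case unfolding e s3
    using has_vector_derivative_add[OF A B] unfolding s1 s4 add.assoc .
qed

end



lemma hvd_add: "hvd (k + j) g S = hvd k (hvd j g S) S"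
  by (induction k) auto

lemma hvd_cong: "(\<forall>t\<in>S. u t = w t) \<Longrightarrow> \<forall>t\<in>S. hvd k u S t = hvd k w S t"
proof (induction k)
  case 0 then show ?case by simp
next
  case (Suc k)
  show ?case
  proof
    fix t assume t: "t \<in> S"
    have "\<And>f'. (hvd k u S has_vector_derivative f') (at t within S) \<longleftrightarrow>
                (hvd k w S has_vector_derivative f') (at t within S)"
      using Suc has_vector_derivative_transform[OF t] by metis
    then show "hvd (Suc k) u S t = hvd (Suc k) w S t" by (simp add: vector_derivative_def)
  qed
qed

definition dterm :: "nat list \<Rightarrow> nat list list" where
  "dterm as = (1 # as) # map (\<lambda>i. as[i := Suc (as!i)]) [0..<length as]"

fun Es :: "nat \<Rightarrow> nat list list" where
  "Es 0 = [[]]"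
| "Es (Suc k) = concat (map dterm (Es k))"

lemma Es_range: "as \<in> set (Es k) \<Longrightarrow> a \<in> set as \<Longrightarrow> 1 \<le> a \<and> a \<le> k"
proof (induction k arbitrary: as a)
  case 0 then show ?case by simp
next
  case (Suc k)
  then obtain bs where bs: "bs \<in> set (Es k)" "as \<in> set (dterm bs)" by auto
  show ?case
  proof (cases "as = 1 # bs")
    case True then show ?thesis using Suc.IH[OF bs(1)] Suc.prems by fastforce
  next
    case False
    then obtain i where i: "i < length bs" "as = bs[i := Suc (bs!i)]" using bs by (auto simp: dterm_def)
    have "a \<in> insert (Suc (bs!i)) (set bs)" using Suc.prems(2) i set_update_subset_insert by fastforce
    moreover have "bs!i \<le> k" using Suc.IH[OF bs(1), of "bs!i"] i by auto
    ultimately show ?thesis using Suc.IH[OF bs(1)] by (auto intro: le_SucI)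
  qed
qed

lemma sum_list_upt_eq: "sum_list (map f [0..<i]) = (\<Sum>j<i. f j)"
  by (induction i) (auto simp: lessThan_Suc add.commute)

lemma sum_list_vd:
  "(\<And>x. x \<in> set xs \<Longrightarrow> (F x has_vector_derivative F' x) net) \<Longrightarrow>
   ((\<lambda>s. \<Sum>x\<leftarrow>xs. F x s) has_vector_derivative (\<Sum>x\<leftarrow>xs. F' x)) net"
  by (induction xs) (auto intro!: has_vector_derivative_add)

lemma sum_list_concat_gen: "sum_list (concat xss) = sum_list (map sum_list xss)"
  by (induction xss) auto

context dfl begin

lemma TT_der:
  assumes sm: "smooth_curve_on g S" and t: "t \<in> S"
  shows "((\<lambda>s. Df (length as) (g s) (map (\<lambda>a. hvd a g S s) as)) has_vector_derivative
     (\<Sum>b\<leftarrow>dterm as. Df (length b) (g t) (map (\<lambda>a. hvd a g S t) b))) (at t within S)"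
proof -
  define m where "m = length as"
  have sm': "\<And>j. (hvd j g S has_vector_derivative hvd (Suc j) g S t) (at t within S)"
    using sm t unfolding smooth_curve_on_def by blast
  have g: "(g has_vector_derivative hvd 1 g S t) (at t within S)" using sm'[of 0] by simp
  have V: "\<forall>j<m. ((\<lambda>s. hvd (as!j) g S s) has_vector_derivative hvd (Suc (as!j)) g S t) (at t within S)"
    using sm' by blast
  have mp: "map (\<lambda>j. hvd (as!j) g S s) [0..<m] = map (\<lambda>a. hvd a g S s) as" for s
    unfolding m_def by (rule nth_equalityI) auto
  note D = der[OF g V, of "[]" m, simplified, unfolded mp]
  have e1: "Df (Suc m) (g t) (hvd 1 g S t # map (\<lambda>a. hvd a g S t) as) =
      Df (length (1 # as)) (g t) (map (\<lambda>a. hvd a g S t) (1 # as))" using m_def by simp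
  have e2: "(\<Sum>k<m. Df m (g t) (map (\<lambda>j. if j = k then hvd (Suc (as ! k)) g S t else hvd (as ! j) g S t) [0..<m]))
     = (\<Sum>i\<leftarrow>[0..<m]. Df (length (as[i := Suc (as!i)])) (g t) (map (\<lambda>a. hvd a g S t) (as[i := Suc (as!i)])))"
    unfolding sum_list_upt_eq
  proof (intro sum.cong refl)
    fix k assume "k \<in> {..<m}"
    then have k: "k < m" by simp
    have "map (\<lambda>j. if j = k then hvd (Suc (as ! k)) g S t else hvd (as ! j) g S t) [0..<m]
       = map (\<lambda>a. hvd a g S t) (as[k := Suc (as!k)])"
      using k unfolding m_def by (intro nth_equalityI) (auto simp: nth_list_update)
    then show "Df m (g t) (map (\<lambda>j. if j = k then hvd (Suc (as ! k)) g S t else hvd (as ! j) g S t) [0..<m]) =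
         Df (length (as[k := Suc (as!k)])) (g t) (map (\<lambda>a. hvd a g S t) (as[k := Suc (as!k)]))"
      using m_def by simp
  qed
  have "(\<Sum>b\<leftarrow>dterm as. Df (length b) (g t) (map (\<lambda>a. hvd a g S t) b)) =
     Df (length (1 # as)) (g t) (map (\<lambda>a. hvd a g S t) (1 # as)) +
     (\<Sum>i\<leftarrow>[0..<m]. Df (length (as[i := Suc (as!i)])) (g t) (map (\<lambda>a. hvd a g S t) (as[i := Suc (as!i)])))"
    unfolding dterm_def m_def by (simp add: o_def)
  then show ?thesis using D e1 e2 m_def by simp
qed

lemma fdb:
  assumes sm: "smooth_curve_on g {0..h}" and h: "0 < h"
  shows "\<forall>t\<in>{0..h}. hvd k (\<lambda>t. Df 0 (g t) []) {0..h} t =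
          (\<Sum>as\<leftarrow>Es k. Df (length as) (g t) (map (\<lambda>a. hvd a g {0..h} t) as))"
proof (induction k)
  case 0 then show ?case by simp
next
  case (Suc k)
  show ?case
  proof
    fix t assume t: "t \<in> {0..h}"
    have D: "((\<lambda>s. \<Sum>as\<leftarrow>Es k. Df (length as) (g s) (map (\<lambda>a. hvd a g {0..h} s) as)) has_vector_derivative
       (\<Sum>as\<leftarrow>Es k. \<Sum>b\<leftarrow>dterm as. Df (length b) (g t) (map (\<lambda>a. hvd a g {0..h} t) b))) (at t within {0..h})"
      by (rule sum_list_vd) (rule TT_der[OF sm t])
    have e: "(\<Sum>as\<leftarrow>Es k. \<Sum>b\<leftarrow>dterm as. Df (length b) (g t) (map (\<lambda>a. hvd a g {0..h} t) b)) =
        (\<Sum>as\<leftarrow>Es (Suc k). Df (length as) (g t) (map (\<lambda>a. hvd a g {0..h} t) as))"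
      by (simp add: map_concat sum_list_concat_gen o_def)
    have D2: "(hvd k (\<lambda>t. Df 0 (g t) []) {0..h} has_vector_derivative
       (\<Sum>as\<leftarrow>Es (Suc k). Df (length as) (g t) (map (\<lambda>a. hvd a g {0..h} t) as))) (at t within {0..h})"
      using has_vector_derivative_transform[OF t _ D] Suc e by auto
    show "hvd (Suc k) (\<lambda>t. Df 0 (g t) []) {0..h} t =
        (\<Sum>as\<leftarrow>Es (Suc k). Df (length as) (g t) (map (\<lambda>a. hvd a g {0..h} t) as))"
      using vector_derivative_within_closed_interval[OF h t D2] by simp
  qed
qed

end

definition pc :: "(real \<Rightarrow> 'a::real_normed_vector) \<Rightarrow> bool" where
  "pc g \<longleftrightarrow> (\<exists>N c. \<forall>t. g t = (\<Sum>i<N. t^i *\<^sub>R c i))"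

lemma pc_deriv: "pc g \<Longrightarrow> \<exists>g'. pc g' \<and> (\<forall>t. (g has_vector_derivative g' t) (at t within S))"
proof -
  assume "pc g"
  then obtain N c where g: "\<And>t. g t = (\<Sum>i<N. t^i *\<^sub>R c i)" unfolding pc_def by blast
  then have ge: "g = (\<lambda>t. \<Sum>i<N. t^i *\<^sub>R c i)" by auto
  define g' where "g' t = (\<Sum>i<N. (real i * t^(i-1)) *\<^sub>R c i)" for t
  have "(g has_vector_derivative g' t) (at t within S)" for t
    unfolding ge g'_def
    by (intro has_vector_derivative_sum) (auto intro!: derivative_eq_intros)
  moreover have "pc g'"
  proof (cases N)
    case 0 then show ?thesis unfolding pc_def g'_def by (intro exI[of _ 0]) auto
  next
    case (Suc M)
    have "g' t = (\<Sum>i<M. t^i *\<^sub>R (real (Suc i) *\<^sub>R c (Suc i)))" for t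
      unfolding g'_def Suc sum.lessThan_Suc_shift by (simp add: mult.commute)
    then show ?thesis unfolding pc_def
      by (intro exI[of _ M] exI[of _ "\<lambda>i. real (Suc i) *\<^sub>R c (Suc i)"]) blast
  qed
  ultimately show ?thesis by blast
qed

lemma pc_step:
  fixes g :: "real \<Rightarrow> 'a::euclidean_space"
  assumes "pc p" "\<forall>t\<in>{0..h}. hvd j g {0..h} t = p t" "0 < h"
  shows "\<exists>p'. pc p' \<and> (\<forall>t\<in>{0..h}. (hvd j g {0..h} has_vector_derivative p' t) (at t within {0..h})
                  \<and> hvd (Suc j) g {0..h} t = p' t)"
proof -
  obtain p' where p': "pc p'" "\<forall>t. (p has_vector_derivative p' t) (at t within {0..h})"
    using pc_deriv[OF assms(1)] by blast
  have "(hvd j g {0..h} has_vector_derivative p' t) (at t within {0..h})" if "t \<in> {0..h}" for t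
    using has_vector_derivative_transform[OF that _ p'(2)[rule_format, of t]] assms(2) by auto
  moreover have "hvd (Suc j) g {0..h} t = p' t" if "t \<in> {0..h}" for t
    using vector_derivative_within_closed_interval[OF assms(3) that calculation[OF that]] by simp
  ultimately show ?thesis using p' by blast
qed

lemma pc_smooth:
  fixes g :: "real \<Rightarrow> 'a::euclidean_space"
  assumes "pc g" "0 < h" shows "smooth_curve_on g {0..h}"
proof -
  have A: "\<exists>p. pc p \<and> (\<forall>t\<in>{0..h}. hvd j g {0..h} t = p t)" for j
  proof (induction j)
    case 0 then show ?case using assms by auto
  next
    case (Suc j)
    then obtain p where "pc p" "\<forall>t\<in>{0..h}. hvd j g {0..h} t = p t" by blast
    then show ?case using pc_step[OF _ _ assms(2)] by blast
  qed
  show ?thesis unfolding smooth_curve_on_def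
  proof (intro allI ballI)
    fix j t assume t: "t \<in> {0..h}"
    obtain p where "pc p" "\<forall>t\<in>{0..h}. hvd j g {0..h} t = p t" using A by blast
    then show "(hvd j g {0..h} has_vector_derivative hvd (Suc j) g {0..h} t) (at t within {0..h})"
      using pc_step[OF _ _ assms(2)] t by metis
  qed
qed




lemma prod_bound: "\<forall>v\<in>set vs. norm v \<le> K \<Longrightarrow> 0 \<le> K \<Longrightarrow> (\<Prod>v\<leftarrow>vs. norm v) \<le> K ^ length vs"
  by (induction vs) (auto intro!: mult_mono prod_list_nonneg)

lemma norm_sum_list_le:
  "(\<And>x. x \<in> set xs \<Longrightarrow> norm (f x) \<le> g x) \<Longrightarrow> norm (\<Sum>x\<leftarrow>xs. f x) \<le> (\<Sum>x\<leftarrow>xs. g x)"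
  by (induction xs) (auto intro!: norm_triangle_le add_mono)

lemma sum_list_mult_r: "(\<Sum>x\<leftarrow>xs. f x) * (e::real) = (\<Sum>x\<leftarrow>xs. f x * e)"
  by (induction xs) (auto simp: algebra_simps)

lemma sum_list_diff_gen: "(\<Sum>x\<leftarrow>xs. f x) - (\<Sum>x\<leftarrow>xs. g x) = (\<Sum>x\<leftarrow>xs. f x - g x :: 'b::ab_group_add)"
  by (induction xs) (auto simp: algebra_simps)

context dfl begin

lemma term_bounds:
  fixes Gq Gd :: "nat \<Rightarrow> 'a"
  assumes rng: "\<forall>a\<in>set as. a \<in> {1..j}"
    and B: "\<forall>i\<in>{1..j}. norm (Gq i) \<le> K \<and> norm (Gd i - Gq i) \<le> K * e"
    and K: "0 \<le> K" and e: "0 \<le> e" "e \<le> 1"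
  shows "norm (Df (length as) x (map Gq as)) \<le> Mb (length as) * K ^ length as"
    and "norm (Df (length as) x (map Gd as) - Df (length as) x (map Gq as))
          \<le> Mb (length as) * real (length as) * (2*K+1) ^ length as * e"
proof -
  define m where "m = length as"
  define L where "L = 2*K+1"
  have L0: "0 \<le> L" using K L_def by simp
  have bq: "\<forall>v\<in>set (map Gq as). norm v \<le> K" using rng B by auto
  show "norm (Df (length as) x (map Gq as)) \<le> Mb (length as) * K ^ length as"
    using bnd[of "map Gq as" "length as" x] prod_bound[OF bq K] Mb_nonneg[of "length as"]
    by (simp add: order_trans mult_left_mono)
  have bq': "\<forall>v\<in>set (map Gq as). norm v \<le> L" using bq L_def K by force
  have bd': "\<forall>v\<in>set (map Gd as). norm v \<le> L"
  proof
    fix v assume "v \<in> set (map Gd as)"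
    then obtain a where a: "a \<in> set as" "v = Gd a" by auto
    have "norm (Gd a) \<le> norm (Gq a) + norm (Gd a - Gq a)" by (rule norm_triangle_sub)
    also have "\<dots> \<le> K + K * e" using B rng a by (auto intro: add_mono)
    also have "\<dots> \<le> L" using K e L_def mult_left_le[of e K] by simp
    finally show "norm v \<le> L" using a by simp
  qed
  have each: "norm (Df m x (take i (map Gd as) @ (map Gd as ! i - map Gq as ! i) # drop (Suc i) (map Gq as)))
        \<le> Mb m * L ^ m * e" if i: "i < m" for i
  proof -
    let ?t = "take i (map Gd as)" and ?d = "map Gd as ! i - map Gq as ! i" and ?r = "drop (Suc i) (map Gq as)"
    have lt: "length ?t = i" "length ?r = m - Suc i" using i m_def by auto
    have pt: "(\<Prod>v\<leftarrow>?t. norm v) \<le> L ^ i"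
    proof -
      have "\<forall>v\<in>set ?t. norm v \<le> L" using bd' by (meson in_set_takeD)
      then show ?thesis using prod_bound[of ?t L] L0 lt(1) by simp
    qed
    have pr: "(\<Prod>v\<leftarrow>?r. norm v) \<le> L ^ (m - Suc i)"
    proof -
      have "\<forall>v\<in>set ?r. norm v \<le> L" using bq' by (meson in_set_dropD)
      then show ?thesis using prod_bound[of ?r L] L0 lt(2) by simp
    qed
    have pd: "norm ?d \<le> L * e"
    proof -
      have "norm ?d \<le> K * e" using B rng i m_def by auto
      also have "\<dots> \<le> L * e" using e L_def K by (intro mult_right_mono) auto
      finally show ?thesis .
    qed
    have "norm (Df m x (?t @ ?d # ?r)) \<le> Mb m * (\<Prod>v\<leftarrow>?t @ ?d # ?r. norm v)"
      by (rule bnd) (use lt i in simp)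
    also have "(\<Prod>v\<leftarrow>?t @ ?d # ?r. norm v) = (\<Prod>v\<leftarrow>?t. norm v) * (norm ?d * (\<Prod>v\<leftarrow>?r. norm v))" by simp
    also have "\<dots> \<le> L ^ i * ((L * e) * L ^ (m - Suc i))"
      using pt pr pd by (intro mult_mono) (auto intro!: prod_list_nonneg mult_nonneg_nonneg L0 e zero_le_power)
    also have "\<dots> = L ^ (i + Suc (m - Suc i)) * e" by (simp add: power_add algebra_simps)
    also have "i + Suc (m - Suc i) = m" using i by simp
    finally show ?thesis using Mb_nonneg[of m] by (simp add: mult_left_mono mult.assoc)
  qed
  have "Df m x (map Gd as) - Df m x (map Gq as) =
      (\<Sum>i<m. Df m x (take i (map Gd as) @ (map Gd as ! i - map Gq as ! i) # drop (Suc i) (map Gq as)))"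
    by (rule tele) (auto simp: m_def)
  also have "norm \<dots> \<le> (\<Sum>i<m. Mb m * L ^ m * e)"
    by (rule sum_norm_le) (use each in auto)
  also have "\<dots> = Mb m * real m * L ^ m * e" by simp
  finally show "norm (Df (length as) x (map Gd as) - Df (length as) x (map Gq as))
          \<le> Mb (length as) * real (length as) * (2*K+1) ^ length as * e"
    unfolding m_def L_def .
qed

lemma step:
  fixes Gq Gd :: "nat \<Rightarrow> 'a"
  assumes B: "\<forall>i\<in>{1..Suc k}. norm (Gq i) \<le> K \<and> norm (Gd i - Gq i) \<le> K * e"
    and K: "0 \<le> K" and e: "0 \<le> e" "e \<le> 1"
    and z: "Gd 0 = Gq 0"
    and fq: "Gq (Suc (Suc k)) = (\<Sum>as\<leftarrow>Es k. Df (length as) (Gq 0) (map Gq as))"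
    and fd: "Gd (Suc (Suc k)) = (\<Sum>as\<leftarrow>Es k. Df (length as) (Gd 0) (map Gd as))"
  shows "norm (Gq (Suc (Suc k))) \<le> (\<Sum>as\<leftarrow>Es k. Mb (length as) * K ^ length as)
       \<and> norm (Gd (Suc (Suc k)) - Gq (Suc (Suc k)))
           \<le> (\<Sum>as\<leftarrow>Es k. Mb (length as) * real (length as) * (2*K+1) ^ length as) * e"
proof -
  have rng: "\<forall>a\<in>set as. a \<in> {1..Suc k}" if "as \<in> set (Es k)" for as
    using Es_range[OF that] by (auto intro: le_SucI)
  have "norm (Gq (Suc (Suc k))) \<le> (\<Sum>as\<leftarrow>Es k. Mb (length as) * K ^ length as)"
    unfolding fq by (rule norm_sum_list_le) (use term_bounds(1)[OF rng B K e] in auto)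
  moreover have "norm (Gd (Suc (Suc k)) - Gq (Suc (Suc k)))
           \<le> (\<Sum>as\<leftarrow>Es k. Mb (length as) * real (length as) * (2*K+1) ^ length as) * e"
    unfolding fq fd z sum_list_diff_gen sum_list_mult_r
    by (rule norm_sum_list_le) (use term_bounds(2)[OF rng B K e] in auto)
  ultimately show ?thesis by blast
qed

end



lemma (in dfl) main_sigma:
  fixes q qd :: "real \<Rightarrow> real \<Rightarrow> 'a" and \<sigma> :: "real \<Rightarrow> real" and h0 p :: real
  assumes h0: "h0 > 0" and p: "p > 0"
    and q_smooth: "\<And>h. h \<in> {0<..h0} \<Longrightarrow> smooth_curve_on (q h) {0..h}"
    and q_ode: "\<And>h t. h \<in> {0<..h0} \<Longrightarrow> t \<in> {0..h} \<Longrightarrow> hvd 2 (q h) {0..h} t = Df 0 (q h t) []"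
    and qd_PC: "\<And>h. h \<in> {0<..h0} \<Longrightarrow> PC_Hermite (\<lambda>x. Df 0 x []) n h (q h) (qd h)"
    and qbd: "\<exists>B. \<forall>h\<in>{0<..h0}. \<forall>t\<in>{0..h}. norm (hvd 1 (q h) {0..h} t) \<le> B"
    and sig: "\<And>h. \<sigma> h = 0 \<or> \<sigma> h = h"
    and err: "(\<lambda>h. norm (hvd 1 (qd h) {0..h} (\<sigma> h) - hvd 1 (q h) {0..h} (\<sigma> h))) \<in> O[at_right 0](\<lambda>h. h powr p)"
  shows "\<forall>j\<in>{1..n}. (\<lambda>h. norm (hvd j (qd h) {0..h} (\<sigma> h) - hvd j (q h) {0..h} (\<sigma> h)))
            \<in> O[at_right 0](\<lambda>h. h powr p)"
proof -
  define Gq where "Gq i h = hvd i (q h) {0..h} (\<sigma> h)" for i h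
  define Gd where "Gd i h = hvd i (qd h) {0..h} (\<sigma> h)" for i h
  have sigS: "\<sigma> h \<in> {0..h}" if "0 < h" for h using sig[of h] that by auto
  have z: "Gd 0 h = Gq 0 h" if h: "h \<in> {0<..h0}" for h
    using qd_PC[OF h] sig[of h] unfolding PC_Hermite_def Gd_def Gq_def by auto
  have fq: "Gq (Suc (Suc k)) h = (\<Sum>as\<leftarrow>Es k. Df (length as) (Gq 0 h) (map (\<lambda>a. Gq a h) as))"
    if h: "h \<in> {0<..h0}" for h k
  proof -
    have s: "\<sigma> h \<in> {0..h}" using sigS h by auto
    have e2: "Suc (Suc k) = k + 2" by simp
    have "Gq (Suc (Suc k)) h = hvd k (hvd 2 (q h) {0..h}) {0..h} (\<sigma> h)"
      unfolding Gq_def e2 hvd_add ..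
    also have "\<dots> = hvd k (\<lambda>t. Df 0 (q h t) []) {0..h} (\<sigma> h)"
      using hvd_cong[of "{0..h}" "hvd 2 (q h) {0..h}" "\<lambda>t. Df 0 (q h t) []" k] q_ode[OF h] s by blast
    also have "\<dots> = (\<Sum>as\<leftarrow>Es k. Df (length as) (Gq 0 h) (map (\<lambda>a. Gq a h) as))"
      using fdb[OF q_smooth[OF h], of k] h s unfolding Gq_def by auto
    finally show ?thesis .
  qed
  have fd: "Gd (Suc (Suc k)) h = (\<Sum>as\<leftarrow>Es k. Df (length as) (Gd 0 h) (map (\<lambda>a. Gd a h) as))"
    if h: "h \<in> {0<..h0}" and kn: "Suc (Suc k) \<le> n" for h k
  proof -
    have s: "\<sigma> h \<in> {0..h}" using sigS h by auto
    have PC: "PC_Hermite (\<lambda>x. Df 0 x []) n h (q h) (qd h)" using qd_PC[OF h] .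
    then obtain c where c: "\<forall>t. qd h t = (\<Sum>i\<le>2*n-1. t ^ i *\<^sub>R c i)" unfolding PC_Hermite_def by blast
    have "pc (qd h)" unfolding pc_def
      by (intro exI[of _ "Suc (2*n-1)"] exI[of _ c]) (use c in \<open>simp add: lessThan_Suc_atMost\<close>)
    then have sm: "smooth_curve_on (qd h) {0..h}" using pc_smooth h by auto
    have coll: "hvd (Suc (Suc k)) (qd h) {0..h} (\<sigma> h) = hvd k (\<lambda>t. Df 0 (qd h t) []) {0..h} (\<sigma> h)"
    proof -
      have C: "\<forall>\<tau>\<in>{0, h}. \<forall>j\<in>{2..n}. hvd j (qd h) {0..h} \<tau> = hvd (j - 2) (\<lambda>t. Df 0 (qd h t) []) {0..h} \<tau>"
        using PC unfolding PC_Hermite_def by blast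
      have "\<sigma> h \<in> {0, h}" using sig[of h] by blast
      moreover have "Suc (Suc k) \<in> {2..n}" using kn by simp
      ultimately have "hvd (Suc (Suc k)) (qd h) {0..h} (\<sigma> h) = hvd (Suc (Suc k) - 2) (\<lambda>t. Df 0 (qd h t) []) {0..h} (\<sigma> h)"
        using C by blast
      then show ?thesis by simp
    qed
    show ?thesis using coll fdb[OF sm, of k] h s unfolding Gd_def by auto
  qed
  obtain B where B: "\<forall>h\<in>{0<..h0}. \<forall>t\<in>{0..h}. norm (hvd 1 (q h) {0..h} t) \<le> B" using qbd by blast
  obtain c where c: "c > 0" "eventually (\<lambda>h. norm (norm (Gd 1 h - Gq 1 h)) \<le> c * norm (h powr p)) (at_right 0)"
    using landau_o.bigE[OF err] unfolding Gd_def Gq_def by blast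
  have ev0: "eventually (\<lambda>h::real. 0 < h \<and> h \<le> h0 \<and> h < 1) (at_right 0)"
    unfolding eventually_at_right_field using h0 by (intro exI[of _ "min h0 1"]) auto
  have claim: "\<exists>K\<ge>0. eventually (\<lambda>h. \<forall>i\<in>{1..j}. norm (Gq i h) \<le> K \<and> norm (Gd i h - Gq i h) \<le> K * (h powr p)) (at_right 0)"
    if "1 \<le> j" "j \<le> n" for j
    using that
  proof (induction j)
    case 0 then show ?case by simp
  next
    case (Suc j)
    show ?case
    proof (cases j)
      case 0
      have "eventually (\<lambda>h. \<forall>i\<in>{1..Suc j}. norm (Gq i h) \<le> max (max B c) 0 \<and>
               norm (Gd i h - Gq i h) \<le> max (max B c) 0 * (h powr p)) (at_right 0)"
        using eventually_conj[OF ev0 c(2)]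
      proof (rule eventually_mono)
        fix h :: real assume a: "(0 < h \<and> h \<le> h0 \<and> h < 1) \<and> norm (norm (Gd 1 h - Gq 1 h)) \<le> c * norm (h powr p)"
        have "norm (Gq 1 h) \<le> B" using B a sigS[of h] unfolding Gq_def by auto
        moreover have "norm (Gd 1 h - Gq 1 h) \<le> c * h powr p" using a by simp
        moreover have "c * h powr p \<le> max (max B c) 0 * h powr p" by (intro mult_right_mono) auto
        ultimately show "\<forall>i\<in>{1..Suc j}. norm (Gq i h) \<le> max (max B c) 0 \<and>
               norm (Gd i h - Gq i h) \<le> max (max B c) 0 * (h powr p)" using 0 by auto
      qed
      then show ?thesis by (intro exI[of _ "max (max B c) 0"]) auto
    next
      case (Suc k)
      obtain K where K: "K \<ge> 0" "eventually (\<lambda>h. \<forall>i\<in>{1..j}. norm (Gq i h) \<le> K \<and> norm (Gd i h - Gq i h) \<le> K * (h powr p)) (at_right 0)"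
        using Suc.IH Suc.prems Suc by auto
      define C1 where "C1 = (\<Sum>as\<leftarrow>Es k. Mb (length as) * K ^ length as)"
      define C2 where "C2 = (\<Sum>as\<leftarrow>Es k. Mb (length as) * real (length as) * (2*K+1) ^ length as)"
      define K' where "K' = max K (max C1 C2)"
      have "eventually (\<lambda>h. \<forall>i\<in>{1..Suc j}. norm (Gq i h) \<le> K' \<and> norm (Gd i h - Gq i h) \<le> K' * (h powr p)) (at_right 0)"
        using eventually_conj[OF ev0 K(2)]
      proof (rule eventually_mono)
        fix h :: real
        assume a: "(0 < h \<and> h \<le> h0 \<and> h < 1) \<and> (\<forall>i\<in>{1..j}. norm (Gq i h) \<le> K \<and> norm (Gd i h - Gq i h) \<le> K * (h powr p))"
        have hh: "h \<in> {0<..h0}" using a by auto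
        have e0: "0 \<le> h powr p" by simp
        have e1: "h powr p \<le> 1" using a p by (intro powr_le1) auto
        have Bk: "\<forall>i\<in>{1..Suc k}. norm (Gq i h) \<le> K \<and> norm (Gd i h - Gq i h) \<le> K * (h powr p)"
          using a Suc by simp
        have st: "norm (Gq (Suc (Suc k)) h) \<le> C1 \<and> norm (Gd (Suc (Suc k)) h - Gq (Suc (Suc k)) h) \<le> C2 * h powr p"
          unfolding C1_def C2_def
          by (rule step[OF Bk K(1) e0 e1 z[OF hh] fq[OF hh] fd[OF hh]]) (use Suc.prems Suc in simp)
        show "\<forall>i\<in>{1..Suc j}. norm (Gq i h) \<le> K' \<and> norm (Gd i h - Gq i h) \<le> K' * (h powr p)"
        proof
          fix i assume i: "i \<in> {1..Suc j}"
          show "norm (Gq i h) \<le> K' \<and> norm (Gd i h - Gq i h) \<le> K' * (h powr p)"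
          proof (cases "i \<le> j")
            case True
            then have "norm (Gq i h) \<le> K \<and> norm (Gd i h - Gq i h) \<le> K * (h powr p)" using a i by auto
            moreover have "K * h powr p \<le> K' * h powr p" using e0 by (intro mult_right_mono) (auto simp: K'_def)
            ultimately show ?thesis by (auto simp: K'_def)
          next
            case False
            then have "i = Suc (Suc k)" using i Suc by auto
            moreover have "C2 * h powr p \<le> K' * h powr p" using e0 by (intro mult_right_mono) (auto simp: K'_def)
            ultimately show ?thesis using st by (auto simp: K'_def)
          qed
        qed
      qed
      moreover have "0 \<le> K'" using K(1) unfolding K'_def by linarith
      ultimately show ?thesis by blast
    qed
  qed
  show ?thesis
  proof
    fix j assume j: "j \<in> {1..n}"
    obtain K where K: "K \<ge> 0" "eventually (\<lambda>h. \<forall>i\<in>{1..n}. norm (Gq i h) \<le> K \<and> norm (Gd i h - Gq i h) \<le> K * (h powr p)) (at_right 0)"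
      using claim[of n] j by auto
    have "eventually (\<lambda>h. norm (norm (Gd j h - Gq j h)) \<le> (K + 1) * norm (h powr p)) (at_right 0)"
      using eventually_conj[OF ev0 K(2)]
    proof (rule eventually_mono)
      fix h :: real
      assume a: "(0 < h \<and> h \<le> h0 \<and> h < 1) \<and> (\<forall>i\<in>{1..n}. norm (Gq i h) \<le> K \<and> norm (Gd i h - Gq i h) \<le> K * (h powr p))"
      then have "norm (Gd j h - Gq j h) \<le> K * (h powr p)" using j by auto
      also have "\<dots> \<le> (K + 1) * h powr p" by (intro mult_right_mono) auto
      finally show "norm (norm (Gd j h - Gq j h)) \<le> (K + 1) * norm (h powr p)" by simp
    qed
    then show "(\<lambda>h. norm (hvd j (qd h) {0..h} (\<sigma> h) - hvd j (q h) {0..h} (\<sigma> h))) \<in> O[at_right 0](\<lambda>h. h powr p)"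
      using K(1) unfolding Gd_def Gq_def by (intro landau_o.bigI[of "K+1"]) auto
  qed
qed


theorem mainTheorem1:
  fixes f :: "'a::euclidean_space \<Rightarrow> 'a"
    and n :: nat and h0 :: real and p :: real
    and q qd :: "real \<Rightarrow> real \<Rightarrow> 'a"
  assumes f_smooth: "smooth_bounded_derivs f"
    and n_ge: "n \<ge> 3"
    and h0_pos: "h0 > 0"
    and p_pos: "p > 0"
    and q_smooth: "\<And>h. h \<in> {0<..h0} \<Longrightarrow> smooth_curve_on (q h) {0..h}"
    and q_ode: "\<And>h t. h \<in> {0<..h0} \<Longrightarrow> t \<in> {0..h} \<Longrightarrow> hvd 2 (q h) {0..h} t = f (q h t)"
    and qd_PC: "\<And>h. h \<in> {0<..h0} \<Longrightarrow> PC_Hermite f n h (q h) (qd h)"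
    and q_dot_bdd: "\<exists>B. \<forall>h\<in>{0<..h0}. \<forall>t\<in>{0..h}. norm (hvd 1 (q h) {0..h} t) \<le> B"
    and qd_dot_bdd: "\<exists>B. \<forall>h\<in>{0<..h0}. \<forall>\<tau>\<in>{0, h}. norm (hvd 1 (qd h) {0..h} \<tau>) \<le> B"
    and qd_dot_err0: "(\<lambda>h. norm (hvd 1 (qd h) {0..h} 0 - hvd 1 (q h) {0..h} 0))
                        \<in> O[at_right 0](\<lambda>h. h powr p)"
    and qd_dot_errh: "(\<lambda>h. norm (hvd 1 (qd h) {0..h} h - hvd 1 (q h) {0..h} h))
                        \<in> O[at_right 0](\<lambda>h. h powr p)"
  shows "\<forall>j\<in>{3..n}.
           (\<lambda>h. norm (hvd j (qd h) {0..h} 0 - hvd j (q h) {0..h} 0)) \<in> O[at_right 0](\<lambda>h. h powr p)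
         \<and> (\<lambda>h. norm (hvd j (qd h) {0..h} h - hvd j (q h) {0..h} h)) \<in> O[at_right 0](\<lambda>h. h powr p)"
  proof -
  obtain Df :: "nat \<Rightarrow> 'a \<Rightarrow> 'a list \<Rightarrow> 'a" where
    D0: "\<forall>x. Df 0 x [] = f x" and
    D1: "\<forall>k x vs. length vs = k \<longrightarrow>
            ((\<lambda>y. Df k y vs) has_derivative (\<lambda>w. Df (Suc k) x (w # vs))) (at x)" and
    D2: "\<forall>k. \<exists>M. \<forall>x vs. length vs = k \<longrightarrow> norm (Df k x vs) \<le> M * (\<Prod>v\<leftarrow>vs. norm v)"
    using f_smooth unfolding smooth_bounded_derivs_def by blast
  interpret dfl Df by unfold_locales (use D1 D2 in auto)
  have fe: "f = (\<lambda>x. Df 0 x [])" using D0 by auto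
  have q_ode': "\<And>h t. h \<in> {0<..h0} \<Longrightarrow> t \<in> {0..h} \<Longrightarrow> hvd 2 (q h) {0..h} t = Df 0 (q h t) []"
    using q_ode D0 by simp
  have qd_PC': "\<And>h. h \<in> {0<..h0} \<Longrightarrow> PC_Hermite (\<lambda>x. Df 0 x []) n h (q h) (qd h)"
    using qd_PC fe by simp
  have A: "\<forall>j\<in>{1..n}. (\<lambda>h. norm (hvd j (qd h) {0..h} 0 - hvd j (q h) {0..h} 0)) \<in> O[at_right 0](\<lambda>h. h powr p)"
    using main_sigma[OF h0_pos p_pos q_smooth q_ode' qd_PC' q_dot_bdd, of "\<lambda>h. 0"] qd_dot_err0 by simp
  have B: "\<forall>j\<in>{1..n}. (\<lambda>h. norm (hvd j (qd h) {0..h} h - hvd j (q h) {0..h} h)) \<in> O[at_right 0](\<lambda>h. h powr p)"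
    using main_sigma[OF h0_pos p_pos q_smooth q_ode' qd_PC' q_dot_bdd, of "\<lambda>h. h"] qd_dot_errh by simp
  show ?thesis using A B by auto
qed

end
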